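(* Under the standing assumptions in the context, there exist a neighborhood $\mathcal U$ of $(0,\bar X)$ and $C>0$ such that for every multi-index $\alpha$ with $|\alpha|=1$ and every $(t,X)\in\mathcal U\cap\{t>0\}$, \[ |\partial_X^\alpha\lambda_1|\le C a^{3/2},\qquad |\partial_X^\alpha\lambda_2|\le C\sqrt a,\qquad |\partial_X^\alpha\lambda_3|\le C\sqrt a . \]
   Context: Let $W\subset\mathbb R^l$ be open, $\bar X\in W$, $c,T>0$, and let $a(t,X),b(t,X)$ be real-valued $C^\infty$ functions on $(-c,T)\times W$ with bounded derivatives of all orders. Assume $\Delta(t,X):=4a(t,X)^3-27b(t,X)^2\ge 0$ on $[0,T)\times W$, $a(0,\bar X)=0$, and $a(t,X)>0$ on $(0,T)\times W$. Let $S(t,X)=\begin{bmatrix}3&0&-a\\0&2a&3b\\-a&3b&a^2\end{bmatrix}$ and let $0\le\lambda_1\le\lambda_2\le\lambda_3$ be its eigenvalues (which are smooth on $\mathcal U\cap\{t>0\}$ for a small neighborhood $\mathcal U$ of $(0,\bar X)$). *)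

theory Defs
  imports "HOL-Analysis.Analysis"
begin

text \<open>Dg vs is the iterated derivative of g in the directions of the list vs; the (Frechet)
  derivative of Dg vs at x is the linear map h maps to Dg (h # vs) x.\<close>
definition smooth_bdd_on :: "'a::euclidean_space set \<Rightarrow> ('a \<Rightarrow> real) \<Rightarrow> bool" where
  "smooth_bdd_on S g \<longleftrightarrow>
     (\<exists>Dg :: 'a list \<Rightarrow> 'a \<Rightarrow> real.
        (\<forall>x\<in>S. Dg [] x = g x) \<and>
        (\<forall>vs. \<forall>x\<in>S. (Dg vs has_derivative (\<lambda>h. Dg (h # vs) x)) (at x)) \<and>
        (\<forall>vs. set vs \<subseteq> Basis \<longrightarrow> bounded (Dg vs ` S)))"

definition Smat :: "real \<Rightarrow> real \<Rightarrow> real^3^3" where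
  "Smat a b = vector [vector [3, 0, - a], vector [0, 2 * a, 3 * b], vector [- a, 3 * b, a ^ 2]]"

definition eigs3 :: "real^3^3 \<Rightarrow> real \<times> real \<times> real" where
  "eigs3 M = (THE e. case e of (l1, l2, l3) \<Rightarrow>
      l1 \<le> l2 \<and> l2 \<le> l3 \<and> (\<forall>\<mu>. det (\<mu> *\<^sub>R mat 1 - M) = (\<mu> - l1) * (\<mu> - l2) * (\<mu> - l3)))"

definition eig :: "nat \<Rightarrow> real^3^3 \<Rightarrow> real" where
  "eig k M = (case eigs3 M of (l1, l2, l3) \<Rightarrow> if k = 1 then l1 else if k = 2 then l2 else l3)"

end

theory Submission
  imports Defs
begin

definition cp :: "real \<Rightarrow> real \<Rightarrow> real \<Rightarrow> real" where
 "cp a b \<mu> = \<mu>^3 - (3+2*a+a^2)*\<mu>^2 + (6*a+2*a^2+2*a^3-9*b^2)*\<mu> - (4*a^3-27*b^2)"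
lemma det_Smat: "det (\<mu> *\<^sub>R mat 1 - Smat a b) = cp a b \<mu>"
  unfolding det_3 Smat_def cp_def
  by (simp add: vector_def mat_def power2_eq_square power3_eq_cube algebra_simps)
definition good :: "real \<Rightarrow> real \<Rightarrow> bool" where
 "good a b \<longleftrightarrow> 0 < a \<and> a \<le> 1/100 \<and> 27*b^2 \<le> 4*a^3"

lemma good_facts:
  assumes "good a b"
  shows "0 < a" "a \<le> 1/100" "27*b^2 \<le> 4*a^3" "a^2 \<le> a/100" "a^3 \<le> a^2/100" "a^4 \<le> a^3/100"
    "0 \<le> b^2" "0 \<le> a*b^2" "0 \<le> a^2*b^2" "0 < a^2" "0 < a^3" "0 < a^4" "a*b^2 \<le> b^2/100" "a^2*b^2 \<le> b^2/100"
proof -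
  show a: "0 < a" "a \<le> 1/100" "27*b^2 \<le> 4*a^3" using assms by (auto simp: good_def)
  show "a^2 \<le> a/100" using a by (simp add: power2_eq_square mult_left_mono[of a "1/100" a, simplified])
  show "a^3 \<le> a^2/100" using a mult_left_mono[of a "1/100" "a^2"] by (simp add: power3_eq_cube power2_eq_square)
  show "a^4 \<le> a^3/100" using a mult_left_mono[of a "1/100" "a^3"] by (simp add: power3_eq_cube power4_eq_xxxx)
  show "0 \<le> b^2" "0 \<le> a*b^2" "0 \<le> a^2*b^2" "0 < a^2" "0 < a^3" "0 < a^4" using a by auto
  show "a*b^2 \<le> b^2/100" using a mult_right_mono[of a "1/100" "b^2"] by simp
  show "a^2*b^2 \<le> b^2/100" using a \<open>a^2 \<le> a/100\<close> mult_right_mono[of "a^2" "1/100" "b^2"] by simp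
qed

lemma cp0: "good a b \<Longrightarrow> cp a b 0 \<le> 0"
  using good_facts[of a b] by (simp add: cp_def)
lemma cp_a2: "good a b \<Longrightarrow> cp a b (a^2) > 0"
proof -
  assume g: "good a b"
  have "cp a b (a^2) = 2*a^3 - a^4 + 27*b^2 - 9*(a^2*b^2)" by (simp add: cp_def algebra_simps power2_eq_square power3_eq_cube power4_eq_xxxx)
  then show ?thesis using good_facts[OF g] by linarith
qed
lemma cp_a: "good a b \<Longrightarrow> cp a b a > 0"
proof -
  assume g: "good a b"
  have "cp a b a = 3*a^2 - 3*a^3 + a^4 + 27*b^2 - 9*(a*b^2)" by (simp add: cp_def algebra_simps power2_eq_square power3_eq_cube power4_eq_xxxx)
  then show ?thesis using good_facts[OF g] by linarith
qed
lemma cp_3a: "good a b \<Longrightarrow> cp a b (3*a) < 0"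
proof -
  assume g: "good a b"
  have "cp a b (3*a) = -9*a^2 + 11*a^3 - 3*a^4 + 27*b^2 - 27*(a*b^2)" by (simp add: cp_def algebra_simps power2_eq_square power3_eq_cube power4_eq_xxxx)
  then show ?thesis using good_facts[OF g] by linarith
qed
lemma cp_1: "good a b \<Longrightarrow> cp a b 1 < 0"
proof -
  assume g: "good a b"
  have "cp a b 1 = -2 + 4*a + a^2 - 2*a^3 + 18*b^2" by (simp add: cp_def algebra_simps power2_eq_square power3_eq_cube power4_eq_xxxx)
  then show ?thesis using good_facts[OF g] by linarith
qed
lemma cp_5: "good a b \<Longrightarrow> cp a b 5 > 0"
proof -
  assume g: "good a b"
  have "cp a b 5 = 50 - 20*a - 15*a^2 + 6*a^3 - 18*b^2" by (simp add: cp_def algebra_simps power2_eq_square power3_eq_cube power4_eq_xxxx)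
  then show ?thesis using good_facts[OF g] by linarith
qed

lemma cubic_fact:
  fixes A B C r1 r2 r3 \<mu> :: real
  assumes p1: "r1^3 + A*r1^2 + B*r1 + C = 0" and p2: "r2^3 + A*r2^2 + B*r2 + C = 0"
    and p3: "r3^3 + A*r3^2 + B*r3 + C = 0" and d: "r1 \<noteq> r2" "r1 \<noteq> r3" "r2 \<noteq> r3"
  shows "\<mu>^3 + A*\<mu>^2 + B*\<mu> + C = (\<mu>-r1)*(\<mu>-r2)*(\<mu>-r3)"
proof -
  have "(r1-r2)*(r1^2+r1*r2+r2^2+A*(r1+r2)+B) = 0" using p1 p2 by algebra
  hence e12: "r1^2+r1*r2+r2^2+A*(r1+r2)+B = 0" using d by simp
  have "(r1-r3)*(r1^2+r1*r3+r3^2+A*(r1+r3)+B) = 0" using p1 p3 by algebra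
  hence e13: "r1^2+r1*r3+r3^2+A*(r1+r3)+B = 0" using d by simp
  have "(r2-r3)*(r1+r2+r3+A) = 0" using e12 e13 by algebra
  hence eA: "A = -(r1+r2+r3)" using d by simp
  have eB: "B = r1*r2+r1*r3+r2*r3" using e12 eA by algebra
  have eC: "C = -(r1*r2*r3)" using p1 eA eB by algebra
  show ?thesis using eA eB eC by algebra
qed

lemma isCont_cp: "isCont (cp a b) x"
  unfolding cp_def by (intro continuous_intros)

lemma good_roots:
  assumes g: "good a b"
  shows "\<exists>r1 r2 r3. 0 \<le> r1 \<and> r1 < a^2 \<and> a < r2 \<and> r2 < 3*a \<and> 1 < r3 \<and> r3 < 5 \<and>
     (\<forall>\<mu>. cp a b \<mu> = (\<mu>-r1)*(\<mu>-r2)*(\<mu>-r3))"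
proof -
  note f = good_facts[OF g]
  obtain r1 where r1: "0 \<le> r1" "r1 \<le> a^2" "cp a b r1 = 0"
    using IVT[of "cp a b" 0 0 "a^2"] cp0[OF g] cp_a2[OF g] isCont_cp f by force
  obtain r2 where r2: "a \<le> r2" "r2 \<le> 3*a" "cp a b r2 = 0"
    using IVT2[of "cp a b" "3*a" 0 a] cp_3a[OF g] cp_a[OF g] isCont_cp f by force
  obtain r3 where r3: "1 \<le> r3" "r3 \<le> 5" "cp a b r3 = 0"
    using IVT[of "cp a b" 1 0 5] cp_1[OF g] cp_5[OF g] isCont_cp by force
  have s: "r1 < a^2" "a < r2" "r2 < 3*a" "1 < r3" "r3 < 5"
    using r1 r2 r3 cp_a2[OF g] cp_a[OF g] cp_3a[OF g] cp_1[OF g] cp_5[OF g]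
    by (metis order_le_less less_irrefl)+
  have d: "r1 \<noteq> r2" "r1 \<noteq> r3" "r2 \<noteq> r3" using s f by linarith+
  have "\<forall>\<mu>. cp a b \<mu> = (\<mu>-r1)*(\<mu>-r2)*(\<mu>-r3)"
  proof
    fix \<mu>
    have "\<And>x. cp a b x = x^3 + (-(3+2*a+a^2))*x^2 + (6*a+2*a^2+2*a^3-9*b^2)*x + (-(4*a^3-27*b^2))"
      by (simp add: cp_def algebra_simps)
    then show "cp a b \<mu> = (\<mu>-r1)*(\<mu>-r2)*(\<mu>-r3)"
      using cubic_fact[of r1 "-(3+2*a+a^2)" "6*a+2*a^2+2*a^3-9*b^2" "-(4*a^3-27*b^2)" r2 r3 \<mu>] r1 r2 r3 d
      by simp
  qed
  then show ?thesis using s r1 by blast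
qed

lemma eigs3_eq:
  assumes s: "r1 < r2" "r2 < r3" and p: "\<forall>\<mu>. det (\<mu> *\<^sub>R mat 1 - M) = (\<mu>-r1)*(\<mu>-r2)*(\<mu>-r3)"
  shows "eigs3 M = (r1, r2, r3)"
  unfolding eigs3_def
proof (rule the_equality)
  show "case (r1, r2, r3) of (l1, l2, l3) \<Rightarrow> l1 \<le> l2 \<and> l2 \<le> l3 \<and>
     (\<forall>\<mu>. det (\<mu> *\<^sub>R mat 1 - M) = (\<mu> - l1) * (\<mu> - l2) * (\<mu> - l3))" using s p by auto
next
  fix e :: "real \<times> real \<times> real"
  assume h: "case e of (l1, l2, l3) \<Rightarrow> l1 \<le> l2 \<and> l2 \<le> l3 \<and>
     (\<forall>\<mu>. det (\<mu> *\<^sub>R mat 1 - M) = (\<mu> - l1) * (\<mu> - l2) * (\<mu> - l3))"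
  obtain l1 l2 l3 where e: "e = (l1,l2,l3)" by (cases e) auto
  have o: "l1 \<le> l2" "l2 \<le> l3" and q: "\<And>\<mu>. (\<mu>-l1)*(\<mu>-l2)*(\<mu>-l3) = (\<mu>-r1)*(\<mu>-r2)*(\<mu>-r3)"
    using h p by (auto simp: e)
  have "\<And>x. (x-l1)*(x-l2)*(x-l3) = 0 \<longleftrightarrow> x = l1 \<or> x = l2 \<or> x = l3" by auto
  moreover have "\<And>x. (x-r1)*(x-r2)*(x-r3) = 0 \<longleftrightarrow> x = r1 \<or> x = r2 \<or> x = r3" by auto
  ultimately have L: "\<And>x. (x = l1 \<or> x = l2 \<or> x = l3) \<longleftrightarrow> (x = r1 \<or> x = r2 \<or> x = r3)"
    using q by metis
  have "l1 = r1 \<and> l2 = r2 \<and> l3 = r3"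
    using L[of l1] L[of l2] L[of l3] L[of r1] L[of r2] L[of r3] o s by (smt (verit))
  then show "e = (r1, r2, r3)" using e by simp
qed

lemma good_eigs:
  assumes g: "good a b"
  shows "\<exists>r1 r2 r3. 0 \<le> r1 \<and> r1 < a^2 \<and> a < r2 \<and> r2 < 3*a \<and> 1 < r3 \<and> r3 < 5 \<and>
     (\<forall>\<mu>. cp a b \<mu> = (\<mu>-r1)*(\<mu>-r2)*(\<mu>-r3)) \<and>
     eig 1 (Smat a b) = r1 \<and> eig 2 (Smat a b) = r2 \<and> eig 3 (Smat a b) = r3"
proof -
  obtain r1 r2 r3 where r: "0 \<le> r1" "r1 < a^2" "a < r2" "r2 < 3*a" "1 < r3" "r3 < 5"
     "\<forall>\<mu>. cp a b \<mu> = (\<mu>-r1)*(\<mu>-r2)*(\<mu>-r3)" using good_roots[OF g] by blast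
  have "a^2 \<le> a/100" using good_facts[OF g] by simp
  hence "r1 < r2" "r2 < r3" using r good_facts[OF g] by linarith+
  hence "eigs3 (Smat a b) = (r1,r2,r3)" using eigs3_eq r(7) det_Smat by metis
  then show ?thesis using r by (auto simp: eig_def)
qed



lemma root_tendsto:
  fixes P f q :: "real \<Rightarrow> real"
  assumes "(P \<longlongrightarrow> 0) F" "\<forall>\<^sub>F s in F. \<bar>P s\<bar> = \<bar>f s - f0\<bar> * q s" "\<forall>\<^sub>F s in F. q s \<ge> \<delta>" "\<delta> > 0"
  shows "(f \<longlongrightarrow> f0) F"
proof -
  have "\<forall>\<^sub>F s in F. norm (f s - f0) \<le> \<bar>P s\<bar> / \<delta>"
    using assms(2,3)
  proof eventually_elim
    case (elim s)
    have "\<bar>f s - f0\<bar> * \<delta> \<le> \<bar>f s - f0\<bar> * q s" using elim by (simp add: mult_left_mono)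
    then show ?case using elim assms(4) by (simp add: field_simps)
  qed
  moreover have "((\<lambda>s. \<bar>P s\<bar> / \<delta>) \<longlongrightarrow> 0) F"
    using tendsto_divide[OF tendsto_rabs[OF assms(1)] tendsto_const[of \<delta>]] assms(4) by simp
  ultimately have "((\<lambda>s. f s - f0) \<longlongrightarrow> 0) F" by (rule Lim_null_comparison)
  then show ?thesis by (simp add: LIM_zero_iff)
qed

lemma root_deriv:
  fixes P f q :: "real \<Rightarrow> real"
  assumes P: "(P has_real_derivative P') (at 0)" and P0: "P 0 = 0"
    and E: "\<forall>\<^sub>F s in at 0. P s = (f0 - f s) * q s" and q: "(q \<longlongrightarrow> q0) (at 0)" and q0: "q0 \<noteq> 0"
    and f0: "f 0 = f0"
  shows "(f has_real_derivative (- P' / q0)) (at 0)"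
proof -
  have "((\<lambda>y. (P y - P 0) / (y - 0)) \<longlongrightarrow> P') (at 0)" using P by (simp add: has_field_derivative_iff)
  hence L: "((\<lambda>y. - ((P y - P 0) / (y - 0)) / q y) \<longlongrightarrow> - P' / q0) (at 0)"
    by (intro tendsto_intros q q0)
  have "\<forall>\<^sub>F y in at 0. q y \<noteq> 0" using q q0 tendsto_imp_eventually_ne by blast
  with E have ev: "\<forall>\<^sub>F y in at 0. - ((P y - P 0) / (y - 0)) / q y = (f y - f 0) / (y - 0)"
  proof eventually_elim
    case (elim y)
    then show ?case using P0 f0 by (cases "y = 0") (simp_all add: field_simps)
  qed
  have "((\<lambda>y. (f y - f 0) / (y - 0)) \<longlongrightarrow> - P' / q0) (at 0)"
    by (rule Lim_transform_eventually[OF L ev])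
  then show ?thesis by (simp add: has_field_derivative_iff)
qed

definition Pd :: "real \<Rightarrow> real \<Rightarrow> real \<Rightarrow> real \<Rightarrow> real \<Rightarrow> real" where
 "Pd a b a1 b1 r = -(2*a1 + 2*a*a1)*r^2 + (6*a1 + 4*a*a1 + 6*a^2*a1 - 18*b*b1)*r - (12*a^2*a1 - 54*b*b1)"

lemma cp_deriv:
  assumes "(\<alpha> has_real_derivative a1) (at 0)" "(\<beta> has_real_derivative b1) (at 0)"
  shows "((\<lambda>s. cp (\<alpha> s) (\<beta> s) r) has_real_derivative Pd (\<alpha> 0) (\<beta> 0) a1 b1 r) (at 0)"
  unfolding cp_def
  apply (rule derivative_eq_intros refl assms)+
  apply (simp add: Pd_def algebra_simps power2_eq_square power3_eq_cube)
  done

lemma prod_lb: "c \<le> \<bar>x\<bar> \<Longrightarrow> d \<le> \<bar>y\<bar> \<Longrightarrow> 0 \<le> c \<Longrightarrow> 0 \<le> d \<Longrightarrow> c*d \<le> \<bar>x\<bar>*\<bar>y::real\<bar>"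
  by (rule mult_mono) auto



lemma eig_deriv:
  assumes da: "(\<alpha> has_real_derivative a1) (at 0)" and db: "(\<beta> has_real_derivative b1) (at 0)"
    and G: "\<forall>\<^sub>F s in nhds 0. good (\<alpha> s) (\<beta> s)"
  shows "\<exists>r1 r2 r3. 0 \<le> r1 \<and> r1 < (\<alpha> 0)^2 \<and> \<alpha> 0 < r2 \<and> r2 < 3 * \<alpha> 0 \<and> 1 < r3 \<and> r3 < 5 \<and>
    ((\<lambda>s. eig 1 (Smat (\<alpha> s) (\<beta> s))) has_real_derivative (- Pd (\<alpha> 0) (\<beta> 0) a1 b1 r1 / ((r1-r2)*(r1-r3)))) (at 0) \<and>
    ((\<lambda>s. eig 2 (Smat (\<alpha> s) (\<beta> s))) has_real_derivative (- Pd (\<alpha> 0) (\<beta> 0) a1 b1 r2 / ((r2-r1)*(r2-r3)))) (at 0) \<and>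
    ((\<lambda>s. eig 3 (Smat (\<alpha> s) (\<beta> s))) has_real_derivative (- Pd (\<alpha> 0) (\<beta> 0) a1 b1 r3 / ((r3-r1)*(r3-r2)))) (at 0)"
proof -
  define R where "R k s = eig k (Smat (\<alpha> s) (\<beta> s))" for k s
  define a0 where "a0 = \<alpha> 0"
  have En: "\<forall>\<^sub>F s in nhds 0. good (\<alpha> s) (\<beta> s) \<and> 0 \<le> R 1 s \<and> R 1 s < (\<alpha> s)^2 \<and> \<alpha> s < R 2 s \<and>
     R 2 s < 3 * \<alpha> s \<and> 1 < R 3 s \<and> R 3 s < 5 \<and>
     (\<forall>\<mu>. cp (\<alpha> s) (\<beta> s) \<mu> = (\<mu> - R 1 s)*(\<mu> - R 2 s)*(\<mu> - R 3 s))"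
    using G
  proof eventually_elim
    case (elim s)
    then show ?case using good_eigs[OF elim] unfolding R_def by auto
  qed
  note E0 = eventually_nhds_x_imp_x[OF En]
  hence g0: "good a0 (\<beta> 0)" unfolding a0_def by simp
  note f0 = good_facts[OF g0]
  have Ea: "\<forall>\<^sub>F s in at 0. good (\<alpha> s) (\<beta> s) \<and> 0 \<le> R 1 s \<and> R 1 s < (\<alpha> s)^2 \<and> \<alpha> s < R 2 s \<and>
     R 2 s < 3 * \<alpha> s \<and> 1 < R 3 s \<and> R 3 s < 5 \<and>
     (\<forall>\<mu>. cp (\<alpha> s) (\<beta> s) \<mu> = (\<mu> - R 1 s)*(\<mu> - R 2 s)*(\<mu> - R 3 s))"
    using En unfolding eventually_at_filter by (auto elim: eventually_mono)
  have ta: "(\<alpha> \<longlongrightarrow> a0) (at 0)" using DERIV_isCont[OF da] unfolding a0_def isCont_def .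
  have E1: "\<forall>\<^sub>F s in at 0. a0/2 < \<alpha> s" using order_tendstoD(1)[OF ta, of "a0/2"] f0 by simp
  have E2: "\<forall>\<^sub>F s in at 0. \<alpha> s < 2*a0" using order_tendstoD(2)[OF ta, of "2*a0"] f0 by simp
  define P where "P k s = cp (\<alpha> s) (\<beta> s) (R k 0)" for k s
  have dP: "(P k has_real_derivative Pd a0 (\<beta> 0) a1 b1 (R k 0)) (at 0)" for k
    unfolding P_def a0_def by (rule cp_deriv[OF da db])
  have P0: "P k 0 = 0" if "k \<in> {1,2,3}" for k
    using E0 that unfolding P_def by auto
  have tP: "(P k \<longlongrightarrow> 0) (at 0)" if "k \<in> {1,2,3}" for k
    using DERIV_isCont[OF dP[of k]] P0[OF that] unfolding isCont_def by simp
  have R10: "0 \<le> R 1 0" "R 1 0 < a0^2" "a0 < R 2 0" "R 2 0 < 3*a0" "1 < R 3 0" "R 3 0 < 5"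
    using E0 unfolding a0_def by auto
  have sq: "a0^2 \<le> a0/100" using f0 by simp
  have c1: "(R 1 \<longlongrightarrow> R 1 0) (at 0)"
  proof (rule root_tendsto[OF tP[of 1], where q = "\<lambda>s. \<bar>R 1 0 - R 2 s\<bar> * \<bar>R 1 0 - R 3 s\<bar>" and \<delta> = "a0/8"])
    show "\<forall>\<^sub>F s in at 0. \<bar>P 1 s\<bar> = \<bar>R 1 s - R 1 0\<bar> * (\<bar>R 1 0 - R 2 s\<bar> * \<bar>R 1 0 - R 3 s\<bar>)"
      using Ea by eventually_elim (auto simp: P_def abs_mult abs_minus_commute)
    show "\<forall>\<^sub>F s in at 0. a0/8 \<le> \<bar>R 1 0 - R 2 s\<bar> * \<bar>R 1 0 - R 3 s\<bar>"
      using Ea E1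
    proof eventually_elim
      case (elim s)
      have "a0/4 \<le> \<bar>R 1 0 - R 2 s\<bar>" "1/2 \<le> \<bar>R 1 0 - R 3 s\<bar>" using elim R10 sq f0 by linarith+
      from prod_lb[OF this] f0 show ?case by simp
    qed
  qed (use f0(1) in auto)
  have c2: "(R 2 \<longlongrightarrow> R 2 0) (at 0)"
  proof (rule root_tendsto[OF tP[of 2], where q = "\<lambda>s. \<bar>R 2 0 - R 1 s\<bar> * \<bar>R 2 0 - R 3 s\<bar>" and \<delta> = "a0/4"])
    show "\<forall>\<^sub>F s in at 0. \<bar>P 2 s\<bar> = \<bar>R 2 s - R 2 0\<bar> * (\<bar>R 2 0 - R 1 s\<bar> * \<bar>R 2 0 - R 3 s\<bar>)"
      using Ea by eventually_elim (auto simp: P_def abs_mult abs_minus_commute)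
    show "\<forall>\<^sub>F s in at 0. a0/4 \<le> \<bar>R 2 0 - R 1 s\<bar> * \<bar>R 2 0 - R 3 s\<bar>"
      using Ea E2
    proof eventually_elim
      case (elim s)
      have "(\<alpha> s)^2 \<le> \<alpha> s / 100" using good_facts[of "\<alpha> s" "\<beta> s"] elim by simp
      hence "a0/2 \<le> \<bar>R 2 0 - R 1 s\<bar>" "1/2 \<le> \<bar>R 2 0 - R 3 s\<bar>" using elim R10 sq f0 by linarith+
      from prod_lb[OF this] f0 show ?case by simp
    qed
  qed (use f0(1) in auto)
  have c3: "(R 3 \<longlongrightarrow> R 3 0) (at 0)"
  proof (rule root_tendsto[OF tP[of 3], where q = "\<lambda>s. \<bar>R 3 0 - R 1 s\<bar> * \<bar>R 3 0 - R 2 s\<bar>" and \<delta> = "1/4"])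
    show "\<forall>\<^sub>F s in at 0. \<bar>P 3 s\<bar> = \<bar>R 3 s - R 3 0\<bar> * (\<bar>R 3 0 - R 1 s\<bar> * \<bar>R 3 0 - R 2 s\<bar>)"
      using Ea by eventually_elim (auto simp: P_def abs_mult abs_minus_commute)
    show "\<forall>\<^sub>F s in at 0. 1/4 \<le> \<bar>R 3 0 - R 1 s\<bar> * \<bar>R 3 0 - R 2 s\<bar>"
      using Ea
    proof eventually_elim
      case (elim s)
      have "(\<alpha> s)^2 \<le> \<alpha> s / 100" "\<alpha> s \<le> 1/100" using good_facts[of "\<alpha> s" "\<beta> s"] elim by simp_all
      hence "1/2 \<le> \<bar>R 3 0 - R 1 s\<bar>" "1/2 \<le> \<bar>R 3 0 - R 2 s\<bar>" using elim R10 sq f0 by linarith+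
      from prod_lb[OF this] show ?case by simp
    qed
  qed auto
  have d1: "(R 1 has_real_derivative (- Pd a0 (\<beta> 0) a1 b1 (R 1 0) / ((R 1 0 - R 2 0)*(R 1 0 - R 3 0)))) (at 0)"
  proof (rule root_deriv[OF dP P0, where q = "\<lambda>s. (R 1 0 - R 2 s) * (R 1 0 - R 3 s)"])
    show "\<forall>\<^sub>F s in at 0. P 1 s = (R 1 0 - R 1 s) * ((R 1 0 - R 2 s) * (R 1 0 - R 3 s))"
      using Ea by eventually_elim (auto simp: P_def)
    show "((\<lambda>s. (R 1 0 - R 2 s) * (R 1 0 - R 3 s)) \<longlongrightarrow> (R 1 0 - R 2 0)*(R 1 0 - R 3 0)) (at 0)"
      by (intro tendsto_intros c2 c3)
    show "(R 1 0 - R 2 0)*(R 1 0 - R 3 0) \<noteq> 0" using R10 sq f0 by auto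
  qed auto
  have d2: "(R 2 has_real_derivative (- Pd a0 (\<beta> 0) a1 b1 (R 2 0) / ((R 2 0 - R 1 0)*(R 2 0 - R 3 0)))) (at 0)"
  proof (rule root_deriv[OF dP P0, where q = "\<lambda>s. (R 2 0 - R 1 s) * (R 2 0 - R 3 s)"])
    show "\<forall>\<^sub>F s in at 0. P 2 s = (R 2 0 - R 2 s) * ((R 2 0 - R 1 s) * (R 2 0 - R 3 s))"
      using Ea by eventually_elim (auto simp: P_def)
    show "((\<lambda>s. (R 2 0 - R 1 s) * (R 2 0 - R 3 s)) \<longlongrightarrow> (R 2 0 - R 1 0)*(R 2 0 - R 3 0)) (at 0)"
      by (intro tendsto_intros c1 c3)
    show "(R 2 0 - R 1 0)*(R 2 0 - R 3 0) \<noteq> 0" using R10 sq f0 by auto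
  qed auto
  have d3: "(R 3 has_real_derivative (- Pd a0 (\<beta> 0) a1 b1 (R 3 0) / ((R 3 0 - R 1 0)*(R 3 0 - R 2 0)))) (at 0)"
  proof (rule root_deriv[OF dP P0, where q = "\<lambda>s. (R 3 0 - R 1 s) * (R 3 0 - R 2 s)"])
    show "\<forall>\<^sub>F s in at 0. P 3 s = (R 3 0 - R 3 s) * ((R 3 0 - R 1 s) * (R 3 0 - R 2 s))"
      using Ea by eventually_elim (auto simp: P_def)
    show "((\<lambda>s. (R 3 0 - R 1 s) * (R 3 0 - R 2 s)) \<longlongrightarrow> (R 3 0 - R 1 0)*(R 3 0 - R 2 0)) (at 0)"
      by (intro tendsto_intros c1 c2)
    show "(R 3 0 - R 1 0)*(R 3 0 - R 2 0) \<noteq> 0" using R10 sq f0 by auto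
  qed auto
  show ?thesis
    apply (rule exI[of _ "R 1 0"], rule exI[of _ "R 2 0"], rule exI[of _ "R 3 0"])
    using R10 d1 d2 d3 unfolding R_def a0_def by auto
qed



lemma tri3: "0 \<le> y \<Longrightarrow> \<bar>-(x::real)*y + z*u - w\<bar> \<le> \<bar>x\<bar>*y + \<bar>z\<bar>*\<bar>u\<bar> + \<bar>w\<bar>"
proof -
  assume "0 \<le> y"
  hence "\<bar>-x*y\<bar> = \<bar>x\<bar>*y" "\<bar>z*u\<bar> = \<bar>z\<bar>*\<bar>u\<bar>" by (simp_all add: abs_mult)
  thus ?thesis by linarith
qed

lemma Pd_bound:
  fixes \<sigma> K a b a1 b1 r \<rho> :: real
  assumes s: "0 < \<sigma>" "\<sigma> \<le> 1/10" and a: "a = \<sigma>^2" and b: "\<bar>b\<bar> \<le> \<sigma>^3"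
    and a1: "\<bar>a1\<bar> \<le> K*\<sigma>" and b1: "\<bar>b1\<bar> \<le> K*\<sigma>^2" and r: "\<bar>r\<bar> \<le> \<rho>"
  shows "\<bar>Pd a b a1 b1 r\<bar> \<le> 3*(K*\<sigma>)*\<rho>^2 + (7*(K*\<sigma>) + 18*(K*\<sigma>^5))*\<rho> + 66*(K*\<sigma>^5)"
proof -
  have K: "0 \<le> K" using a1 s by (smt (verit) zero_le_mult_iff)
  have "\<sigma>^2 \<le> (1/10)^2" by (rule power_mono) (use s in auto)
  hence a0: "0 \<le> a" "a \<le> 1/100" using a s by (auto simp: power2_eq_square)
  have c2: "\<bar>2*a1 + 2*a*a1\<bar> \<le> 3*(K*\<sigma>)"
  proof -
    have "2*a1 + 2*a*a1 = (2+2*a)*a1" by algebra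
    hence "\<bar>2*a1 + 2*a*a1\<bar> = (2+2*a)*\<bar>a1\<bar>" using a0 by (simp add: abs_mult)
    also have "\<dots> \<le> 3*(K*\<sigma>)" using mult_mono[OF _ a1, of "2+2*a" 3] a0 K s by simp
    finally show ?thesis .
  qed
  have bb: "\<bar>b*b1\<bar> \<le> K*\<sigma>^5"
  proof -
    have "\<bar>b*b1\<bar> = \<bar>b\<bar>*\<bar>b1\<bar>" by (simp add: abs_mult)
    also have "\<dots> \<le> \<sigma>^3 * (K*\<sigma>^2)" using mult_mono[OF b b1] s by simp
    finally show ?thesis by (simp add: algebra_simps power_add[symmetric] numeral_eq_Suc)
  qed
  have c1: "\<bar>6*a1 + 4*a*a1 + 6*a^2*a1 - 18*b*b1\<bar> \<le> 7*(K*\<sigma>) + 18*(K*\<sigma>^5)"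
  proof -
    have "a^2 \<le> a" using a0 by (simp add: power2_eq_square mult_left_le_one_le)
    have "6*a1 + 4*a*a1 + 6*a^2*a1 = (6+4*a+6*a^2)*a1" by algebra
    hence "\<bar>6*a1 + 4*a*a1 + 6*a^2*a1\<bar> = (6+4*a+6*a^2)*\<bar>a1\<bar>" using a0 by (simp add: abs_mult)
    also have "\<dots> \<le> 7*(K*\<sigma>)" using mult_mono[OF _ a1, of "6+4*a+6*a^2" 7] a0 K s \<open>a^2 \<le> a\<close> by simp
    moreover have "6*a1 + 4*a*a1 + 6*a^2*a1 - 18*b*b1 = (6*a1 + 4*a*a1 + 6*a^2*a1) - 18*(b*b1)" by simp
    ultimately show ?thesis using bb by (smt (verit))
  qed
  have c0: "\<bar>12*a^2*a1 - 54*b*b1\<bar> \<le> 66*(K*\<sigma>^5)"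
  proof -
    have "\<bar>a^2*a1\<bar> \<le> \<sigma>^4 * (K*\<sigma>)" using mult_mono[OF _ a1, of "a^2" "\<sigma>^4"] a s
      by (simp add: abs_mult power_mult[symmetric])
    also have "\<dots> = K*\<sigma>^5" by (simp add: algebra_simps power_add[symmetric] numeral_eq_Suc)
    finally have "\<bar>a^2*a1\<bar> \<le> K*\<sigma>^5" .
    moreover have "12*a^2*a1 - 54*b*b1 = 12*(a^2*a1) - 54*(b*b1)" by simp
    ultimately show ?thesis using bb by (smt (verit))
  qed
  have "\<bar>Pd a b a1 b1 r\<bar> \<le> \<bar>2*a1 + 2*a*a1\<bar>*r^2 + \<bar>6*a1 + 4*a*a1 + 6*a^2*a1 - 18*b*b1\<bar>*\<bar>r\<bar> + \<bar>12*a^2*a1 - 54*b*b1\<bar>"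
    unfolding Pd_def by (rule tri3) simp
  also have "\<dots> \<le> 3*(K*\<sigma>)*\<rho>^2 + (7*(K*\<sigma>) + 18*(K*\<sigma>^5))*\<rho> + 66*(K*\<sigma>^5)"
  proof -
    have "\<bar>r\<bar>^2 \<le> \<rho>^2" by (rule power_mono[OF r]) simp
    hence r2: "r^2 \<le> \<rho>^2" by simp
    have "\<bar>2*a1 + 2*a*a1\<bar>*r^2 \<le> 3*(K*\<sigma>)*\<rho>^2" by (rule mult_mono[OF c2 r2]) (use K s in auto)
    moreover have "\<bar>6*a1 + 4*a*a1 + 6*a^2*a1 - 18*b*b1\<bar>*\<bar>r\<bar> \<le> (7*(K*\<sigma>) + 18*(K*\<sigma>^5))*\<rho>"
      by (rule mult_mono[OF c1 r]) (use K s in auto)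
    ultimately show ?thesis using c0 by linarith
  qed
  finally show ?thesis .
qed

lemma frac_bound: "\<bar>P\<bar> \<le> N \<Longrightarrow> 0 < M \<Longrightarrow> M \<le> \<bar>Q\<bar> \<Longrightarrow> \<bar>- P / Q\<bar> \<le> N / (M::real)"
proof -
  assume h: "\<bar>P\<bar> \<le> N" "0 < M" "M \<le> \<bar>Q\<bar>"
  have "\<bar>- P / Q\<bar> = \<bar>P\<bar> / \<bar>Q\<bar>" by (simp add: abs_divide)
  also have "\<dots> \<le> N / M" using h by (intro frac_le) auto
  finally show ?thesis .
qed

lemma mono_s: "0 \<le> K \<Longrightarrow> 0 < \<sigma> \<Longrightarrow> \<sigma> \<le> 1/10 \<Longrightarrow> K*\<sigma>^(n+2) \<le> K*\<sigma>^n/(100::real)"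
proof -
  assume h: "0 \<le> K" "0 < \<sigma>" "\<sigma> \<le> 1/10"
  have "\<sigma>^2 \<le> (1/10)^2" by (rule power_mono) (use h in auto)
  hence "\<sigma>^n * \<sigma>^2 \<le> \<sigma>^n * (1/100)" using h by (intro mult_left_mono) (auto simp: power2_eq_square)
  hence "\<sigma>^(n+2) \<le> \<sigma>^n/100" by (simp only: power_add)
  from mult_left_mono[OF this h(1)] show ?thesis by simp
qed

lemma D_bounds:
  fixes \<sigma> K a b a1 b1 r1 r2 r3 :: real
  assumes s: "0 < \<sigma>" "\<sigma> \<le> 1/10" and a: "a = \<sigma>^2" and b: "\<bar>b\<bar> \<le> \<sigma>^3"
    and a1: "\<bar>a1\<bar> \<le> K*\<sigma>" and b1: "\<bar>b1\<bar> \<le> K*\<sigma>^2"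
    and r: "0 \<le> r1" "r1 < a^2" "a < r2" "r2 < 3*a" "1 < r3" "r3 < 5"
  shows "\<bar>- Pd a b a1 b1 r1 / ((r1-r2)*(r1-r3))\<bar> \<le> 500*K * \<sigma>^3"
    "\<bar>- Pd a b a1 b1 r2 / ((r2-r1)*(r2-r3))\<bar> \<le> 500*K * \<sigma>"
    "\<bar>- Pd a b a1 b1 r3 / ((r3-r1)*(r3-r2))\<bar> \<le> 500*K * \<sigma>"
proof -
  have K: "0 \<le> K" using a1 s by (smt (verit) zero_le_mult_iff)
  note m = mono_s[OF K s]
  have m1: "K*\<sigma>^3 \<le> K*\<sigma>/100" using m[of 1] by (simp add: eval_nat_numeral)
  have m3: "K*\<sigma>^5 \<le> K*\<sigma>^3/100" using m[of 3] by (simp add: eval_nat_numeral)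
  have m5: "K*\<sigma>^7 \<le> K*\<sigma>^5/100" using m[of 5] by (simp add: eval_nat_numeral)
  have m7: "K*\<sigma>^9 \<le> K*\<sigma>^7/100" using m[of 7] by (simp add: eval_nat_numeral)
  have s2: "\<sigma>^2 \<le> 1/100" using mono_s[of 1 \<sigma> 0] s by (simp add: power2_eq_square)
  have s4: "\<sigma>^4 \<le> \<sigma>^2/100" using mono_s[of 1 \<sigma> 2] s by (simp add: eval_nat_numeral)
  have sp: "0 < \<sigma>^2" using s by simp
  have a2: "a^2 = \<sigma>^4" using a by (simp add: power_mult[symmetric])
  have "\<bar>r1\<bar> \<le> \<sigma>^4" using r a2 by simp
  from Pd_bound[OF s a b a1 b1 this]
  have "\<bar>Pd a b a1 b1 r1\<bar> \<le> 21*(K*\<sigma>^9) + 73*(K*\<sigma>^5)"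
    by (simp add: algebra_simps power_add[symmetric] power_mult[symmetric] numeral_eq_Suc)
  hence P1: "\<bar>Pd a b a1 b1 r1\<bar> \<le> 94*(K*\<sigma>^5)" using m5 m7 m3 K by linarith
  have "\<sigma>^2/2 \<le> \<bar>r1-r2\<bar>" "1/2 \<le> \<bar>r1-r3\<bar>" using r a a2 s4 s2 by linarith+
  from prod_lb[OF this] have Q1: "\<sigma>^2/4 \<le> \<bar>(r1-r2)*(r1-r3)\<bar>" using sp by (simp add: abs_mult)
  have "\<bar>- Pd a b a1 b1 r1 / ((r1-r2)*(r1-r3))\<bar> \<le> 94*(K*\<sigma>^5) / (\<sigma>^2/4)"
    by (rule frac_bound[OF P1 _ Q1]) (use sp in simp)
  also have "\<dots> = 376*K*\<sigma>^3" using s by (simp add: field_simps power_add[symmetric] numeral_eq_Suc)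
  also have "\<dots> \<le> 500*K*\<sigma>^3" using K s by (intro mult_right_mono) auto
  finally show "\<bar>- Pd a b a1 b1 r1 / ((r1-r2)*(r1-r3))\<bar> \<le> 500*K * \<sigma>^3" .
  have "\<bar>r2\<bar> \<le> 3*\<sigma>^2" using r a s by simp
  from Pd_bound[OF s a b a1 b1 this]
  have "\<bar>Pd a b a1 b1 r2\<bar> \<le> 93*(K*\<sigma>^5) + 21*(K*\<sigma>^3) + 54*(K*\<sigma>^7)"
    by (simp add: algebra_simps power_add[symmetric] power_mult[symmetric] numeral_eq_Suc)
  hence P2: "\<bar>Pd a b a1 b1 r2\<bar> \<le> 23*(K*\<sigma>^3)" using m5 m3 K by linarith
  have "\<sigma>^2/2 \<le> \<bar>r2-r1\<bar>" "1/2 \<le> \<bar>r2-r3\<bar>" using r a a2 s4 s2 by linarith+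
  from prod_lb[OF this] have Q2: "\<sigma>^2/4 \<le> \<bar>(r2-r1)*(r2-r3)\<bar>" using sp by (simp add: abs_mult)
  have "\<bar>- Pd a b a1 b1 r2 / ((r2-r1)*(r2-r3))\<bar> \<le> 23*(K*\<sigma>^3) / (\<sigma>^2/4)"
    by (rule frac_bound[OF P2 _ Q2]) (use sp in simp)
  also have "\<dots> = 92*K*\<sigma>" using s by (simp add: field_simps power_add[symmetric] numeral_eq_Suc)
  also have "\<dots> \<le> 500*K*\<sigma>" using K s by (intro mult_right_mono) auto
  finally show "\<bar>- Pd a b a1 b1 r2 / ((r2-r1)*(r2-r3))\<bar> \<le> 500*K * \<sigma>" .
  have "\<bar>r3\<bar> \<le> 5" using r by simp
  from Pd_bound[OF s a b a1 b1 this]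
  have "\<bar>Pd a b a1 b1 r3\<bar> \<le> 110*(K*\<sigma>) + 156*(K*\<sigma>^5)"
    by (simp add: algebra_simps power_add[symmetric] power_mult[symmetric] numeral_eq_Suc)
  hence P3: "\<bar>Pd a b a1 b1 r3\<bar> \<le> 112*(K*\<sigma>)" using m1 m3 K by linarith
  have "1/2 \<le> \<bar>r3-r1\<bar>" "1/2 \<le> \<bar>r3-r2\<bar>" using r a a2 s4 s2 by linarith+
  from prod_lb[OF this] have Q3: "1/4 \<le> \<bar>(r3-r1)*(r3-r2)\<bar>" by (simp add: abs_mult)
  have "\<bar>- Pd a b a1 b1 r3 / ((r3-r1)*(r3-r2))\<bar> \<le> 112*(K*\<sigma>) / (1/4)"
    by (rule frac_bound[OF P3 _ Q3]) simp
  also have "\<dots> \<le> 500*K*\<sigma>" using K s by simp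
  finally show "\<bar>- Pd a b a1 b1 r3 / ((r3-r1)*(r3-r2))\<bar> \<le> 500*K * \<sigma>" .
qed



lemma line_DERIV:
  fixes Dg :: "'a::euclidean_space list \<Rightarrow> 'a \<Rightarrow> real"
  assumes Dg: "(Dg vs has_derivative (\<lambda>h. Dg (h # vs) (p + s *\<^sub>R v))) (at (p + s *\<^sub>R v))"
  shows "((\<lambda>s. Dg vs (p + s *\<^sub>R v)) has_real_derivative Dg (v # vs) (p + s *\<^sub>R v)) (at s)"
proof -
  have L: "((\<lambda>s. p + s *\<^sub>R v) has_derivative (\<lambda>h. h *\<^sub>R v)) (at s)"
    by (intro derivative_eq_intros) auto
  have C: "((\<lambda>s. Dg vs (p + s *\<^sub>R v)) has_derivative (\<lambda>h. Dg ((h *\<^sub>R v) # vs) (p + s *\<^sub>R v))) (at s)"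
    using has_derivative_compose[OF L Dg] .
  have lin: "linear (\<lambda>h. Dg (h # vs) (p + s *\<^sub>R v))"
    using has_derivative_bounded_linear[OF Dg] bounded_linear.linear by blast
  have "(\<lambda>h. Dg ((h *\<^sub>R v) # vs) (p + s *\<^sub>R v)) = (\<lambda>h. Dg (v # vs) (p + s *\<^sub>R v) * h)"
  proof
    fix h show "Dg ((h *\<^sub>R v) # vs) (p + s *\<^sub>R v) = Dg (v # vs) (p + s *\<^sub>R v) * h"
      using linear_scale[OF lin, of h v] by simp
  qed
  with C show ?thesis unfolding has_field_derivative_def by simp
qed

lemma taylor2_pt:
  fixes G :: "nat \<Rightarrow> real \<Rightarrow> real"
  assumes D: "\<And>m s. m < 2 \<Longrightarrow> -h \<le> s \<Longrightarrow> s \<le> h \<Longrightarrow> DERIV (G m) s :> G (Suc m) s"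
    and B: "\<And>s. -h \<le> s \<Longrightarrow> s \<le> h \<Longrightarrow> \<bar>G 2 s\<bar> \<le> M"
    and x: "-h \<le> x" "x \<le> h"
  shows "\<bar>G 0 x - G 0 0 - G 1 0 * x\<bar> \<le> M * x^2 / 2"
proof (cases "x = 0")
  case True
  have "0 \<le> M" using B[of 0] x by (smt (verit))
  then show ?thesis using True by simp
next
  case False
  have h: "-h \<le> 0" "0 \<le> h" using x by auto
  obtain t where t: "(if x < 0 then x < t \<and> t < 0 else 0 < t \<and> t < x)"
    "G 0 x = (\<Sum>m<2. (G m 0 / fact m) * (x - 0)^m) + (G 2 t / fact 2) * (x - 0)^2"
    using Taylor[of 2 G "G 0" "-h" h 0 x] D h x False by auto
  have tb: "-h \<le> t" "t \<le> h" using t(1) x by (auto split: if_splits)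
  have e: "G 0 x - G 0 0 - G 1 0 * x = G 2 t * x^2 / 2"
    using t(2) by (simp add: numeral_2_eq_2)
  have "\<bar>G 2 t * x^2 / 2\<bar> = \<bar>G 2 t\<bar> * x^2 / 2" by (simp add: abs_mult)
  also have "\<dots> \<le> M * x^2 / 2" using B[OF tb] by (simp add: mult_right_mono)
  finally have X: "\<bar>G 2 t * x^2 / 2\<bar> \<le> M * x^2 / 2" .
  show ?thesis unfolding e using X .
qed

lemma taylor3_pt:
  fixes G :: "nat \<Rightarrow> real \<Rightarrow> real"
  assumes D: "\<And>m s. m < 3 \<Longrightarrow> -h \<le> s \<Longrightarrow> s \<le> h \<Longrightarrow> DERIV (G m) s :> G (Suc m) s"
    and B: "\<And>s. -h \<le> s \<Longrightarrow> s \<le> h \<Longrightarrow> \<bar>G 3 s\<bar> \<le> M"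
    and x: "-h \<le> x" "x \<le> h"
  shows "\<bar>G 0 x - G 0 0 - G 1 0 * x - G 2 0 * x^2 / 2\<bar> \<le> M * \<bar>x\<bar>^3 / 6"
proof (cases "x = 0")
  case True
  have "0 \<le> M" using B[of 0] x by (smt (verit))
  then show ?thesis using True by simp
next
  case False
  have h: "-h \<le> 0" "0 \<le> h" using x by auto
  obtain t where t: "(if x < 0 then x < t \<and> t < 0 else 0 < t \<and> t < x)"
    "G 0 x = (\<Sum>m<3. (G m 0 / fact m) * (x - 0)^m) + (G 3 t / fact 3) * (x - 0)^3"
    using Taylor[of 3 G "G 0" "-h" h 0 x] D h x False by auto
  have tb: "-h \<le> t" "t \<le> h" using t(1) x by (auto split: if_splits)
  have e: "G 0 x - G 0 0 - G 1 0 * x - G 2 0 * x^2 / 2 = G 3 t * x^3 / 6"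
    using t(2) by (simp add: eval_nat_numeral fact_numeral)
  have "\<bar>G 3 t * x^3 / 6\<bar> = \<bar>G 3 t\<bar> * \<bar>x\<bar>^3 / 6" by (simp add: abs_mult power_abs)
  also have "\<dots> \<le> M * \<bar>x\<bar>^3 / 6" using B[OF tb] by (simp add: mult_right_mono)
  finally have X: "\<bar>G 3 t * x^3 / 6\<bar> \<le> M * \<bar>x\<bar>^3 / 6" .
  show ?thesis unfolding e using X .
qed

lemma glaeser:
  fixes G :: "nat \<Rightarrow> real \<Rightarrow> real"
  assumes D: "\<And>m s. m < 2 \<Longrightarrow> -h \<le> s \<Longrightarrow> s \<le> h \<Longrightarrow> DERIV (G m) s :> G (Suc m) s"
    and B: "\<And>s. -h \<le> s \<Longrightarrow> s \<le> h \<Longrightarrow> \<bar>G 2 s\<bar> \<le> M"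
    and P: "\<And>s. -h \<le> s \<Longrightarrow> s \<le> h \<Longrightarrow> 0 \<le> G 0 s" and h: "0 < h"
  shows "\<bar>G 1 0\<bar> * h \<le> G 0 0 + M * h^2 / 2"
proof -
  have 1: "\<bar>G 0 h - G 0 0 - G 1 0 * h\<bar> \<le> M * h^2 / 2" by (rule taylor2_pt[OF D B]) (use h in auto)
  have 2: "\<bar>G 0 (-h) - G 0 0 - G 1 0 * (-h)\<bar> \<le> M * (-h)^2 / 2" by (rule taylor2_pt[OF D B]) (use h in auto)
  have "0 \<le> G 0 h" "0 \<le> G 0 (-h)" using P h by auto
  moreover have "\<bar>G 1 0\<bar> * h = \<bar>G 1 0 * h\<bar>" using h by (simp add: abs_mult)
  moreover have "G 1 0 * (-h) = - (G 1 0 * h)" "(-h)^2 = h^2" by simp_all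
  ultimately show ?thesis using 1 2 by (smt (verit))
qed

lemma lin_aux: "\<bar>u - z - g - w\<bar> \<le> m \<Longrightarrow> \<bar>v - z + g - w\<bar> \<le> m \<Longrightarrow> \<bar>2*g\<bar> \<le> \<bar>u\<bar> + \<bar>v\<bar> + 2*(m::real)"
  by arith

lemma third_bound:
  fixes G :: "nat \<Rightarrow> real \<Rightarrow> real"
  assumes D: "\<And>m s. m < 3 \<Longrightarrow> -h \<le> s \<Longrightarrow> s \<le> h \<Longrightarrow> DERIV (G m) s :> G (Suc m) s"
    and B: "\<And>s. -h \<le> s \<Longrightarrow> s \<le> h \<Longrightarrow> \<bar>G 3 s\<bar> \<le> M" and h: "0 < h"
  shows "2 * \<bar>G 1 0\<bar> * h \<le> \<bar>G 0 h\<bar> + \<bar>G 0 (-h)\<bar> + M * h^3 / 3"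
proof -
  have 1: "\<bar>G 0 h - G 0 0 - G 1 0 * h - G 2 0 * h^2 / 2\<bar> \<le> M * \<bar>h\<bar>^3 / 6"
    by (rule taylor3_pt[OF D B]) (use h in auto)
  have 2: "\<bar>G 0 (-h) - G 0 0 - G 1 0 * (-h) - G 2 0 * (-h)^2 / 2\<bar> \<le> M * \<bar>-h\<bar>^3 / 6"
    by (rule taylor3_pt[OF D B]) (use h in auto)
  have "2 * \<bar>G 1 0\<bar> * h = \<bar>2 * (G 1 0 * h)\<bar>" using h by (simp add: abs_mult)
  moreover have "\<bar>G 0 h - G 0 0 - G 1 0 * h - G 2 0 * h^2 / 2\<bar> \<le> M * h^3 / 6" using 1 h by simp
  moreover have "\<bar>G 0 (-h) - G 0 0 + G 1 0 * h - G 2 0 * h^2 / 2\<bar> \<le> M * h^3 / 6" using 2 h by simp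
  ultimately show ?thesis using lin_aux[of "G 0 h" "G 0 0" "G 1 0 * h" "G 2 0 * h^2 / 2" "M * h ^ 3 / 6" "G 0 (-h)"] by simp
qed



lemma point_bound:
  fixes Ga Gb :: "nat \<Rightarrow> real \<Rightarrow> real" and \<alpha> \<beta> :: "real \<Rightarrow> real"
  assumes \<rho>: "0 < \<rho>"
    and DA: "\<And>m s. -\<rho> \<le> s \<Longrightarrow> s \<le> \<rho> \<Longrightarrow> DERIV (Ga m) s :> Ga (Suc m) s"
    and DB: "\<And>m s. -\<rho> \<le> s \<Longrightarrow> s \<le> \<rho> \<Longrightarrow> DERIV (Gb m) s :> Gb (Suc m) s"
    and M2: "\<And>s. -\<rho> \<le> s \<Longrightarrow> s \<le> \<rho> \<Longrightarrow> \<bar>Ga 2 s\<bar> \<le> M2"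
    and N3: "\<And>s. -\<rho> \<le> s \<Longrightarrow> s \<le> \<rho> \<Longrightarrow> \<bar>Gb 3 s\<bar> \<le> N3"
    and eqa: "\<And>s. -\<rho> < s \<Longrightarrow> s < \<rho> \<Longrightarrow> Ga 0 s = \<alpha> s"
    and eqb: "\<And>s. -\<rho> < s \<Longrightarrow> s < \<rho> \<Longrightarrow> Gb 0 s = \<beta> s"
    and pos: "\<And>s. -\<rho> < s \<Longrightarrow> s < \<rho> \<Longrightarrow> 0 < \<alpha> s"
    and disc: "\<And>s. -\<rho> < s \<Longrightarrow> s < \<rho> \<Longrightarrow> 27 * (\<beta> s)^2 \<le> 4 * (\<alpha> s)^3"
    and small: "\<alpha> 0 < \<rho>^2" "\<alpha> 0 < 1/100"
    and K: "K = 1 + M2/2 + (1 + (2+M2)^3) + N3/6"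
  shows "\<exists>D1 D2 D3.
           ((\<lambda>s. eig 1 (Smat (\<alpha> s) (\<beta> s))) has_real_derivative D1) (at 0) \<and>
           ((\<lambda>s. eig 2 (Smat (\<alpha> s) (\<beta> s))) has_real_derivative D2) (at 0) \<and>
           ((\<lambda>s. eig 3 (Smat (\<alpha> s) (\<beta> s))) has_real_derivative D3) (at 0) \<and>
           \<bar>D1\<bar> \<le> (500*K) * \<alpha> 0 powr (3/2) \<and>
           \<bar>D2\<bar> \<le> (500*K) * sqrt (\<alpha> 0) \<and>
           \<bar>D3\<bar> \<le> (500*K) * sqrt (\<alpha> 0)"
proof -
  define a0 where "a0 = \<alpha> 0"
  define \<sigma> where "\<sigma> = sqrt a0"
  have a0p: "0 < a0" unfolding a0_def using pos \<rho> by auto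
  have sp: "0 < \<sigma>" unfolding \<sigma>_def using a0p by simp
  have s2: "\<sigma>^2 = a0" unfolding \<sigma>_def using a0p by simp
  have M2p: "0 \<le> M2" using M2[of 0] \<rho> by (smt (verit))
  have N3p: "0 \<le> N3" using N3[of 0] \<rho> by (smt (verit))
  have "\<sigma>^2 < \<rho>^2" using s2 small unfolding a0_def by simp
  hence sr: "\<sigma> < \<rho>" using \<rho> sp by (smt (verit) power_mono)
  have "\<sigma>^2 < (1/10)^2" using s2 small unfolding a0_def by (simp add: power_divide)
  hence s10: "\<sigma> \<le> 1/10" using power_less_imp_less_base[of \<sigma> 2 "1/10"] by simp
  define a1 where "a1 = Ga 1 0"
  define b1 where "b1 = Gb 1 0"
  define b0 where "b0 = \<beta> 0"
  have ev: "\<forall>\<^sub>F s in nhds 0. -\<rho> < s \<and> s < \<rho>"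
    using eventually_nhds_ball[OF \<rho>, of 0] by eventually_elim (auto simp: dist_real_def)
  have da: "(\<alpha> has_real_derivative a1) (at 0)"
  proof -
    have "DERIV (Ga 0) 0 :> a1" using DA[of 0 0] \<rho> unfolding a1_def by simp
    moreover have "\<forall>\<^sub>F s in nhds 0. Ga 0 s = \<alpha> s" using ev by eventually_elim (use eqa in auto)
    ultimately show ?thesis using DERIV_cong_ev[of 0 0 "Ga 0" \<alpha> a1 a1] by simp
  qed
  have db: "(\<beta> has_real_derivative b1) (at 0)"
  proof -
    have "DERIV (Gb 0) 0 :> b1" using DB[of 0 0] \<rho> unfolding b1_def by simp
    moreover have "\<forall>\<^sub>F s in nhds 0. Gb 0 s = \<beta> s" using ev by eventually_elim (use eqb in auto)
    ultimately show ?thesis using DERIV_cong_ev[of 0 0 "Gb 0" \<beta> b1 b1] by simp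
  qed
  have DA2: "\<And>m s. m < 2 \<Longrightarrow> -\<sigma> \<le> s \<Longrightarrow> s \<le> \<sigma> \<Longrightarrow> DERIV (Ga m) s :> Ga (Suc m) s"
    using DA sr by auto
  have M2s: "\<And>s. -\<sigma> \<le> s \<Longrightarrow> s \<le> \<sigma> \<Longrightarrow> \<bar>Ga 2 s\<bar> \<le> M2" using M2 sr by auto
  have Ga0: "Ga 0 0 = a0" using eqa[of 0] \<rho> unfolding a0_def by simp
  have "\<bar>a1\<bar> * \<sigma> \<le> a0 + M2 * \<sigma>^2 / 2"
    unfolding a1_def Ga0[symmetric]
    by (rule glaeser[OF DA2 M2s]) (use eqa pos sr sp in \<open>auto intro: less_imp_le\<close>)
  hence "\<bar>a1\<bar> * \<sigma> \<le> ((1 + M2/2) * \<sigma>) * \<sigma>" using s2 by (simp add: power2_eq_square algebra_simps)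
  hence a1b: "\<bar>a1\<bar> \<le> (1 + M2/2) * \<sigma>" using sp by simp
  have aup: "Ga 0 x \<le> (2 + M2) * \<sigma>^2" if x: "x = \<sigma> \<or> x = -\<sigma>" for x
  proof -
    have "\<bar>Ga 0 x - Ga 0 0 - Ga 1 0 * x\<bar> \<le> M2 * x^2 / 2"
      by (rule taylor2_pt[OF DA2 M2s]) (use x sp in auto)
    hence t0: "Ga 0 x - Ga 0 0 - Ga 1 0 * x \<le> M2 * x^2 / 2" by (rule abs_le_D1)
    have x2: "x^2 = \<sigma>^2" using x by auto
    have t: "Ga 0 x - Ga 0 0 - Ga 1 0 * x \<le> M2 * \<sigma>^2 / 2" using t0 unfolding x2 .
    have "\<bar>x\<bar> = \<sigma>" using x sp by auto
    have "\<bar>Ga 1 0 * x\<bar> \<le> (1 + M2/2) * \<sigma> * \<sigma>"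
      using mult_mono[OF a1b, of "\<bar>x\<bar>" \<sigma>] \<open>\<bar>x\<bar> = \<sigma>\<close> sp M2p unfolding a1_def by (simp add: abs_mult)
    hence "Ga 1 0 * x \<le> (1 + M2/2) * \<sigma>^2" by (simp add: power2_eq_square)
    moreover have "(2 + M2) * \<sigma>^2 = \<sigma>^2 + (1 + M2/2) * \<sigma>^2 + M2 * \<sigma>^2 / 2" by (simp add: algebra_simps)
    ultimately show ?thesis using t Ga0 s2 by linarith
  qed
  define L where "L = 1 + (2+M2)^3"
  have bup: "\<bar>Gb 0 x\<bar> \<le> L * \<sigma>^3" if x: "x = \<sigma> \<or> x = -\<sigma>" for x
  proof -
    have xr: "-\<rho> < x" "x < \<rho>" using x sr sp by auto
    have "0 \<le> Ga 0 x" using eqa[OF xr] pos[OF xr] by simp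
    have "(Ga 0 x)^3 \<le> ((2 + M2) * \<sigma>^2)^3" by (rule power_mono[OF aup[OF x]]) fact
    hence "27 * (Gb 0 x)^2 \<le> 4 * ((2 + M2) * \<sigma>^2)^3" using disc[OF xr] eqa[OF xr] eqb[OF xr] by simp
    moreover have "(2+M2)^3 \<le> L^2"
    proof -
      have "(2+M2)^3 \<le> L" unfolding L_def by simp
      also have "L \<le> L^2"
      proof -
        have "1 \<le> L" using M2p unfolding L_def by simp
        hence "L*1 \<le> L*L" by (intro mult_left_mono) auto
        thus ?thesis by (simp add: power2_eq_square)
      qed
      finally show ?thesis .
    qed
    moreover have "0 \<le> \<sigma>^6" using sp by simp
    ultimately have "(Gb 0 x)^2 \<le> (L * \<sigma>^3)^2"
    proof -
      assume h1: "27 * (Gb 0 x)^2 \<le> 4 * ((2 + M2) * \<sigma>^2)^3" and h2: "(2+M2)^3 \<le> L^2" and h3: "0 \<le> \<sigma>^6"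
      have e1: "((2 + M2) * \<sigma>^2)^3 = (2+M2)^3 * \<sigma>^6" by (simp add: power_mult_distrib power_mult[symmetric])
      have e2: "(L * \<sigma>^3)^2 = L^2 * \<sigma>^6" by (simp add: power_mult_distrib power_mult[symmetric])
      have "(2+M2)^3 * \<sigma>^6 \<le> L^2 * \<sigma>^6" using mult_right_mono[OF h2 h3] .
      moreover have "0 \<le> (2+M2)^3 * \<sigma>^6" using M2p h3 by simp
      ultimately show ?thesis using h1 unfolding e1 e2 by linarith
    qed
    hence "\<bar>Gb 0 x\<bar>^2 \<le> (L * \<sigma>^3)^2" by simp
    thus ?thesis by (rule power2_le_imp_le) (use sp M2p in \<open>simp add: L_def\<close>)
  qed
  have DB3: "\<And>m s. m < 3 \<Longrightarrow> -\<sigma> \<le> s \<Longrightarrow> s \<le> \<sigma> \<Longrightarrow> DERIV (Gb m) s :> Gb (Suc m) s"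
    using DB sr by auto
  have N3s: "\<And>s. -\<sigma> \<le> s \<Longrightarrow> s \<le> \<sigma> \<Longrightarrow> \<bar>Gb 3 s\<bar> \<le> N3" using N3 sr by auto
  have "2 * \<bar>Gb 1 0\<bar> * \<sigma> \<le> \<bar>Gb 0 \<sigma>\<bar> + \<bar>Gb 0 (-\<sigma>)\<bar> + N3 * \<sigma>^3 / 3"
    by (rule third_bound[OF DB3 N3s sp])
  hence "2 * \<bar>b1\<bar> * \<sigma> \<le> 2 * L * \<sigma>^3 + N3 * \<sigma>^3 / 3" using bup[of \<sigma>] bup[of "-\<sigma>"] unfolding b1_def by simp
  hence "\<bar>b1\<bar> * \<sigma> \<le> ((L + N3/6) * \<sigma>^2) * \<sigma>" by (simp add: algebra_simps power2_eq_square power3_eq_cube)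
  hence b1b: "\<bar>b1\<bar> \<le> (L + N3/6) * \<sigma>^2" using sp by simp
  have Kp: "0 \<le> K" using K M2p N3p by simp
  have "(1 + M2/2) * \<sigma> \<le> K * \<sigma>" using K M2p N3p sp unfolding L_def by (intro mult_right_mono) auto
  with a1b have a1K: "\<bar>a1\<bar> \<le> K * \<sigma>" by linarith
  have "(L + N3/6) * \<sigma>^2 \<le> K * \<sigma>^2" using K M2p N3p sp unfolding L_def by (intro mult_right_mono) auto
  with b1b have b1K: "\<bar>b1\<bar> \<le> K * \<sigma>^2" by linarith
  have b0b: "\<bar>b0\<bar> \<le> \<sigma>^3"
  proof -
    have "27 * b0^2 \<le> 4 * a0^3" using disc[of 0] \<rho> unfolding a0_def b0_def by simp
    moreover have "(\<sigma>^3)^2 = a0^3" using s2 by (metis power_mult mult.commute)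
    moreover have "0 < a0^3" using a0p by simp
    ultimately have "b0^2 \<le> (\<sigma>^3)^2" by linarith
    hence "\<bar>b0\<bar>^2 \<le> (\<sigma>^3)^2" by simp
    thus ?thesis by (rule power2_le_imp_le) (use sp in simp)
  qed
  have ta: "(\<alpha> \<longlongrightarrow> a0) (at 0)" using DERIV_isCont[OF da] unfolding a0_def isCont_def .
  have "\<forall>\<^sub>F s in at 0. \<alpha> s < 1/100" using order_tendstoD(2)[OF ta, of "1/100"] small unfolding a0_def by simp
  hence "\<forall>\<^sub>F s in nhds 0. \<alpha> s < 1/100" using small unfolding eventually_nhds_conv_at by simp
  hence G: "\<forall>\<^sub>F s in nhds 0. good (\<alpha> s) (\<beta> s)" using ev
    by eventually_elim (use pos disc in \<open>auto simp: good_def\<close>)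
  obtain r1 r2 r3 where r: "0 \<le> r1" "r1 < a0^2" "a0 < r2" "r2 < 3 * a0" "1 < r3" "r3 < 5"
    and d1: "((\<lambda>s. eig 1 (Smat (\<alpha> s) (\<beta> s))) has_real_derivative (- Pd a0 b0 a1 b1 r1 / ((r1-r2)*(r1-r3)))) (at 0)"
    and d2: "((\<lambda>s. eig 2 (Smat (\<alpha> s) (\<beta> s))) has_real_derivative (- Pd a0 b0 a1 b1 r2 / ((r2-r1)*(r2-r3)))) (at 0)"
    and d3: "((\<lambda>s. eig 3 (Smat (\<alpha> s) (\<beta> s))) has_real_derivative (- Pd a0 b0 a1 b1 r3 / ((r3-r1)*(r3-r2)))) (at 0)"
    using eig_deriv[OF da db G] unfolding a0_def b0_def by blast
  note bds = D_bounds[OF sp s10 s2[symmetric] b0b a1K b1K r]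
  have pw: "a0 powr (3/2) = \<sigma>^3"
  proof -
    have "a0 powr (3/2) = (a0 powr (1/2)) powr 3" by (simp add: powr_powr)
    also have "\<dots> = \<sigma> powr 3" using a0p by (simp add: powr_half_sqrt \<sigma>_def)
    also have "\<dots> = \<sigma>^3" using sp by (simp add: powr_realpow)
    finally show ?thesis .
  qed
  have "\<alpha> 0 powr (3/2) = \<sigma>^3" "sqrt (\<alpha> 0) = \<sigma>" using pw unfolding a0_def \<sigma>_def by auto
  then show ?thesis
    apply (intro exI conjI)
       apply (rule d1)
      apply (rule d2)
     apply (rule d3)
    using bds by (simp_all add: mult.assoc)
qed



lemma unif_bound:
  fixes g :: "'i::finite \<Rightarrow> 'x \<Rightarrow> real"
  assumes "\<And>i. bounded (g i ` S)"
  shows "\<exists>B\<ge>0. \<forall>i. \<forall>x\<in>S. \<bar>g i x\<bar> \<le> B"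
proof -
  have "\<forall>i. \<exists>B. \<forall>x\<in>S. \<bar>g i x\<bar> \<le> B" using assms unfolding bounded_iff by fastforce
  then obtain f where f: "\<And>i. \<forall>x\<in>S. \<bar>g i x\<bar> \<le> f i" by metis
  have "\<forall>i. \<forall>x\<in>S. \<bar>g i x\<bar> \<le> (\<Sum>j\<in>UNIV. \<bar>f j\<bar>)"
  proof (intro allI ballI)
    fix i x assume "x \<in> S"
    have "\<bar>g i x\<bar> \<le> f i" using f \<open>x \<in> S\<close> by blast
    also have "\<dots> \<le> \<bar>f i\<bar>" by simp
    also have "\<dots> \<le> (\<Sum>j\<in>UNIV. \<bar>f j\<bar>)" by (rule member_le_sum) auto
    finally show "\<bar>g i x\<bar> \<le> (\<Sum>j\<in>UNIV. \<bar>f j\<bar>)" .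
  qed
  moreover have "0 \<le> (\<Sum>j\<in>UNIV. \<bar>f j\<bar>)" by (rule sum_nonneg) auto
  ultimately show ?thesis by blast
qed

theorem lemma2p2:
  fixes a b :: "real \<Rightarrow> real^'n \<Rightarrow> real"
    and W :: "(real^'n) set" and Xbar :: "real^'n" and c T :: real
  assumes "open W" and "Xbar \<in> W" and "c > 0" and "T > 0"
    and "smooth_bdd_on ({-c<..<T} \<times> W) (\<lambda>p. a (fst p) (snd p))"
    and "smooth_bdd_on ({-c<..<T} \<times> W) (\<lambda>p. b (fst p) (snd p))"
    and "\<forall>t\<in>{0..<T}. \<forall>X\<in>W. 4 * (a t X) ^ 3 - 27 * (b t X) ^ 2 \<ge> 0"
    and "a 0 Xbar = 0"
    and "\<forall>t\<in>{0<..<T}. \<forall>X\<in>W. a t X > 0"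
  shows "\<exists>U C. open U \<and> (0, Xbar) \<in> U \<and> C > 0 \<and>
           (\<forall>t X i. (t, X) \<in> U \<and> t > 0 \<longrightarrow>
              (\<exists>D1 D2 D3.
                 ((\<lambda>s. eig 1 (Smat (a t (X + s *\<^sub>R axis i 1)) (b t (X + s *\<^sub>R axis i 1))))
                    has_real_derivative D1) (at 0) \<and>
                 ((\<lambda>s. eig 2 (Smat (a t (X + s *\<^sub>R axis i 1)) (b t (X + s *\<^sub>R axis i 1))))
                    has_real_derivative D2) (at 0) \<and>
                 ((\<lambda>s. eig 3 (Smat (a t (X + s *\<^sub>R axis i 1)) (b t (X + s *\<^sub>R axis i 1))))
                    has_real_derivative D3) (at 0) \<and>
                 \<bar>D1\<bar> \<le> C * a t X powr (3/2) \<and>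
                 \<bar>D2\<bar> \<le> C * sqrt (a t X) \<and>
                 \<bar>D3\<bar> \<le> C * sqrt (a t X)))"
proof -
  define S where "S = {-c<..<T} \<times> W"
  obtain Da where Da0: "\<forall>x\<in>S. Da [] x = a (fst x) (snd x)"
    and DaD: "\<forall>vs. \<forall>x\<in>S. (Da vs has_derivative (\<lambda>h. Da (h # vs) x)) (at x)"
    and DaB: "\<forall>vs. set vs \<subseteq> Basis \<longrightarrow> bounded (Da vs ` S)"
    using assms(5) unfolding smooth_bdd_on_def S_def by blast
  obtain Db where Db0: "\<forall>x\<in>S. Db [] x = b (fst x) (snd x)"
    and DbD: "\<forall>vs. \<forall>x\<in>S. (Db vs has_derivative (\<lambda>h. Db (h # vs) x)) (at x)"
    and DbB: "\<forall>vs. set vs \<subseteq> Basis \<longrightarrow> bounded (Db vs ` S)"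
    using assms(6) unfolding smooth_bdd_on_def S_def by blast
  define e where "e i = ((0::real), axis i (1::real))" for i :: 'n
  have eB: "e i \<in> Basis" for i unfolding e_def Basis_prod_def by auto
  obtain M2 where M2p: "0 \<le> M2" and M2: "\<forall>i. \<forall>x\<in>S. \<bar>Da [e i, e i] x\<bar> \<le> M2"
    using unif_bound[of "\<lambda>i x. Da [e i, e i] x" S] DaB eB by auto
  obtain N3 where N3p: "0 \<le> N3" and N3: "\<forall>i. \<forall>x\<in>S. \<bar>Db [e i, e i, e i] x\<bar> \<le> N3"
    using unif_bound[of "\<lambda>i x. Db [e i, e i, e i] x" S] DbB eB by auto
  define K where "K = 1 + M2/2 + (1 + (2+M2)^3) + N3/6"
  have Kp: "0 < K" unfolding K_def using M2p N3p by (simp add: add_pos_nonneg)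
  obtain \<rho>0 where \<rho>0: "0 < \<rho>0" "ball Xbar \<rho>0 \<subseteq> W" using assms(1,2) open_contains_ball by blast
  define \<rho> where "\<rho> = \<rho>0 / 3"
  have \<rho>: "0 < \<rho>" unfolding \<rho>_def using \<rho>0 by simp
  define p0 where "p0 = ((0::real), Xbar)"
  have p0S: "p0 \<in> S" unfolding p0_def S_def using assms(2,3,4) by auto
  define \<kappa> where "\<kappa> = min (\<rho>^2) (1/100)"
  have \<kappa>: "0 < \<kappa>" unfolding \<kappa>_def using \<rho> by simp
  have "isCont (Da []) p0" using has_derivative_continuous DaD p0S by blast
  moreover have "Da [] p0 = 0" using Da0 p0S assms(8) unfolding p0_def by simp
  ultimately have "(Da [] \<longlongrightarrow> 0) (at p0)" unfolding isCont_def by simp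
  hence "\<forall>\<^sub>F p in at p0. Da [] p < \<kappa>" using order_tendstoD(2) \<kappa> by blast
  hence "\<forall>\<^sub>F p in nhds p0. Da [] p < \<kappa>" using \<open>Da [] p0 = 0\<close> \<kappa> unfolding eventually_nhds_conv_at by simp
  moreover have "\<forall>\<^sub>F p in nhds p0. p \<in> ball p0 (min \<rho> T)" using \<rho> assms(4) by (intro eventually_nhds_ball) simp
  ultimately have "\<forall>\<^sub>F p in nhds p0. Da [] p < \<kappa> \<and> p \<in> ball p0 (min \<rho> T)" by eventually_elim simp
  then obtain U where U: "open U" "p0 \<in> U" "\<And>p. p \<in> U \<Longrightarrow> Da [] p < \<kappa> \<and> p \<in> ball p0 (min \<rho> T)"
    unfolding eventually_nhds by blast
  have main: "\<exists>D1 D2 D3.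
                 ((\<lambda>s. eig 1 (Smat (a t (X + s *\<^sub>R axis i 1)) (b t (X + s *\<^sub>R axis i 1))))
                    has_real_derivative D1) (at 0) \<and>
                 ((\<lambda>s. eig 2 (Smat (a t (X + s *\<^sub>R axis i 1)) (b t (X + s *\<^sub>R axis i 1))))
                    has_real_derivative D2) (at 0) \<and>
                 ((\<lambda>s. eig 3 (Smat (a t (X + s *\<^sub>R axis i 1)) (b t (X + s *\<^sub>R axis i 1))))
                    has_real_derivative D3) (at 0) \<and>
                 \<bar>D1\<bar> \<le> (500 * K) * a t X powr (3/2) \<and>
                 \<bar>D2\<bar> \<le> (500 * K) * sqrt (a t X) \<and>
                 \<bar>D3\<bar> \<le> (500 * K) * sqrt (a t X)"
    if tX: "(t, X) \<in> U \<and> 0 < t" for t X and i :: 'n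
  proof -
    have dtX: "dist p0 (t, X) < min \<rho> T" "Da [] (t, X) < \<kappa>" using U(3)[of "(t,X)"] tX by auto
    have "dist 0 t < min \<rho> T" using dist_fst_le[of p0 "(t,X)"] dtX unfolding p0_def by simp
    hence tT: "0 < t" "t < T" using tX by (auto simp: dist_real_def)
    have dX: "dist Xbar X < \<rho>" using dist_snd_le[of p0 "(t,X)"] dtX unfolding p0_def by simp
    define v where "v = e i"
    define p where "p = (t, X)"
    have line: "p + s *\<^sub>R v = (t, X + s *\<^sub>R axis i 1)" for s unfolding p_def v_def e_def by simp
    have inW: "X + s *\<^sub>R axis i 1 \<in> W" if "\<bar>s\<bar> \<le> \<rho>" for s
    proof -
      have "dist Xbar (X + s *\<^sub>R axis i 1) \<le> dist Xbar X + norm (s *\<^sub>R axis i (1::real))"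
        by (metis dist_norm dist_triangle2 add_diff_cancel_left' norm_minus_commute)
      also have "\<dots> < \<rho>0" using dX that unfolding \<rho>_def by simp
      finally show ?thesis using \<rho>0(2) by auto
    qed
    have inS: "p + s *\<^sub>R v \<in> S" if "\<bar>s\<bar> \<le> \<rho>" for s
      unfolding line S_def using inW[OF that] assms(3) tT by auto
    define Ga where "Ga m s = Da (replicate m v) (p + s *\<^sub>R v)" for m s
    define Gb where "Gb m s = Db (replicate m v) (p + s *\<^sub>R v)" for m s
    have aX: "a t X = Da [] p" using Da0 inS[of 0] \<rho> unfolding p_def by simp
    have h1: "\<And>m s. -\<rho> \<le> s \<Longrightarrow> s \<le> \<rho> \<Longrightarrow> DERIV (Ga m) s :> Ga (Suc m) s"
    proof -
      fix m :: nat and s :: real assume s: "-\<rho> \<le> s" "s \<le> \<rho>"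
      hence s': "\<bar>s\<bar> \<le> \<rho>" by simp
      show "DERIV (Ga m) s :> Ga (Suc m) s"
        unfolding Ga_def using line_DERIV[of Da "replicate m v" p s v] DaD inS[OF s'] by simp
    qed
    have h2: "\<And>m s. -\<rho> \<le> s \<Longrightarrow> s \<le> \<rho> \<Longrightarrow> DERIV (Gb m) s :> Gb (Suc m) s"
    proof -
      fix m :: nat and s :: real assume s: "-\<rho> \<le> s" "s \<le> \<rho>"
      hence s': "\<bar>s\<bar> \<le> \<rho>" by simp
      show "DERIV (Gb m) s :> Gb (Suc m) s"
        unfolding Gb_def using line_DERIV[of Db "replicate m v" p s v] DbD inS[OF s'] by simp
    qed
    have h3: "\<And>s. -\<rho> \<le> s \<Longrightarrow> s \<le> \<rho> \<Longrightarrow> \<bar>Ga 2 s\<bar> \<le> M2"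
    proof -
      fix s :: real assume s: "-\<rho> \<le> s" "s \<le> \<rho>"
      hence s': "\<bar>s\<bar> \<le> \<rho>" by simp
      show "\<bar>Ga 2 s\<bar> \<le> M2" unfolding Ga_def v_def using M2 inS[OF s'] unfolding v_def by (simp add: numeral_2_eq_2)
    qed
    have h4: "\<And>s. -\<rho> \<le> s \<Longrightarrow> s \<le> \<rho> \<Longrightarrow> \<bar>Gb 3 s\<bar> \<le> N3"
    proof -
      fix s :: real assume s: "-\<rho> \<le> s" "s \<le> \<rho>"
      hence s': "\<bar>s\<bar> \<le> \<rho>" by simp
      show "\<bar>Gb 3 s\<bar> \<le> N3" unfolding Gb_def v_def using N3 inS[OF s'] unfolding v_def by (simp add: numeral_3_eq_3)
    qed
    have h5: "\<And>s. -\<rho> < s \<Longrightarrow> s < \<rho> \<Longrightarrow> Ga 0 s = a t (X + s *\<^sub>R axis i 1)"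
      unfolding Ga_def using Da0 inS line by (simp add: abs_le_iff)
    have h6: "\<And>s. -\<rho> < s \<Longrightarrow> s < \<rho> \<Longrightarrow> Gb 0 s = b t (X + s *\<^sub>R axis i 1)"
      unfolding Gb_def using Db0 inS line by (simp add: abs_le_iff)
    have h7: "\<And>s. -\<rho> < s \<Longrightarrow> s < \<rho> \<Longrightarrow> 0 < a t (X + s *\<^sub>R axis i 1)"
      using assms(9) inW tT by (simp add: abs_le_iff)
    have h8: "\<And>s. -\<rho> < s \<Longrightarrow> s < \<rho> \<Longrightarrow> 27 * (b t (X + s *\<^sub>R axis i 1))^2 \<le> 4 * (a t (X + s *\<^sub>R axis i 1))^3"
    proof -
      fix s :: real assume s: "-\<rho> < s" "s < \<rho>"
      hence s': "\<bar>s\<bar> \<le> \<rho>" by simp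
      show "27 * (b t (X + s *\<^sub>R axis i 1))^2 \<le> 4 * (a t (X + s *\<^sub>R axis i 1))^3"
        using assms(7) inW[OF s'] tT by force
    qed
    have h9: "a t X < \<rho>^2" "a t X < 1/100" using dtX aX unfolding \<kappa>_def p_def by auto
    show ?thesis
      using point_bound[of \<rho> Ga Gb M2 N3 "\<lambda>s. a t (X + s *\<^sub>R axis i 1)" "\<lambda>s. b t (X + s *\<^sub>R axis i 1)" K,
         OF \<rho> h1 h2 h3 h4 h5 h6 h7 h8 _ _ K_def] h9 by simp
  qed
  show ?thesis
    apply (rule exI[of _ U], rule exI[of _ "500*K"])
    using U(1,2) Kp main unfolding p0_def by auto
qed

end
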